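(* Let $\beta\in(-2,-1)$ and $c\in(0,1)$. For integers $n\ge 3$ let $x_{1,n}<\dots<x_{n,n}$ denote the zeros of the monic Meixner polynomial $M_n(x;\beta,c)$ (when real), let $y_{1,n}<\dots<y_{n,n}$ denote the zeros of $M_n(x;\beta+2,c)$, and put $A_n=\frac{\beta}{c-1}-\beta-n-1$. (a) If $n\geq \frac{\beta}{c-1}-(\beta+1)$, then $A_n\leq 0$ and $$x_{1,n}<y_{1,n}<x_{2,n}<y_{2,n}<\dots<x_{n,n}<y_{n,n}.$$ (b) There is at most one integer $n^*$ with $\frac{\beta}{c-1}-(\beta+2)<n^*<\frac{\beta}{c-1}-(\beta+1)$, and for such $n^*$ one has $0<A_{n^*}<1$. If moreover $n^*\in\left(\frac{\beta}{c-1},\frac{\beta}{c-1}-(\beta+1)\right)$, then the zeros of $M_{n^*}(x;\beta,c)$ and $M_{n^*}(x;\beta+2,c)$ satisfy $x_{1,n^*}<y_{1,n^*}<x_{2,n^*}<y_{2,n^*}<\dots<x_{n^*,n^*}<y_{n^*,n^*}$ if and only if $A_{n^*}<y_{1,n^*}$.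
   Context: Monic Meixner polynomials are defined by $$M_n(x;\beta,c)=\left(\frac{c}{c-1}\right)^n(\beta)_n\sum_{k=0}^{n}\frac{(-n)_k(-x)_k(1-\frac1c)^k}{(\beta)_k\,k!},$$ for real $\beta,c$ with $c\neq 0$ and $\beta\notin\{-1,-2,\dots,-n+1\}$, where $(\alpha)_0=1$ and $(\alpha)_k=\alpha(\alpha+1)\cdots(\alpha+k-1)$ for $k\geq1$. For $\beta+2>0$ and $c\in(0,1)$ the polynomials $M_n(x;\beta+2,c)$ are orthogonal and have real, simple, positive zeros; for $\beta\in(-2,-1)$, $c\in(0,1)$ and $n>\frac{\beta}{c-1}$, the zeros of $M_n(x;\beta,c)$ are real, simple and positive. *)

theory Defs
  imports Complex_Main
begin

definition meixner :: "nat \<Rightarrow> real \<Rightarrow> real \<Rightarrow> real \<Rightarrow> real" where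
  "meixner n \<beta> c x =
     (c / (c - 1)) ^ n * pochhammer \<beta> n *
     (\<Sum>k = 0..n. pochhammer (- real n) k * pochhammer (- x) k * (1 - 1 / c) ^ k
                    / (pochhammer \<beta> k * fact k))"

definition meixner_zeros :: "nat \<Rightarrow> real \<Rightarrow> real \<Rightarrow> real set" where
  "meixner_zeros n \<beta> c = {x. meixner n \<beta> c x = 0}"

text \<open>Increasingly ordered list of the real zeros: entry i is x_{i+1,n}.\<close>
definition zero_list :: "nat \<Rightarrow> real \<Rightarrow> real \<Rightarrow> real list" where
  "zero_list n \<beta> c = sorted_list_of_set (meixner_zeros n \<beta> c)"

definition interlace :: "nat \<Rightarrow> real list \<Rightarrow> real list \<Rightarrow> bool" where
  "interlace n xs ys \<longleftrightarrow> length xs = n \<and> length ys = n \<and>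
     (\<forall>i<n. xs ! i < ys ! i) \<and> (\<forall>i. i + 1 < n \<longrightarrow> ys ! i < xs ! (i + 1))"

definition A_n :: "real \<Rightarrow> real \<Rightarrow> real \<Rightarrow> real" where
  "A_n \<beta> c n = \<beta> / (c - 1) - \<beta> - n - 1"

end

theory Submission
  imports Defs "HOL-Computational_Algebra.Polynomial"
begin

definition Dc :: "nat \<Rightarrow> real \<Rightarrow> real \<Rightarrow> nat \<Rightarrow> real" where
  "Dc n \<beta> c k = (c / (c - 1)) ^ n * pochhammer \<beta> n *
     (pochhammer (- real n) k * (1 - 1 / c) ^ k / (pochhammer \<beta> k * fact k))"

lemma meixner_Dc: "meixner n \<beta> c x = (\<Sum>k=0..n. Dc n \<beta> c k * pochhammer (- x) k)"
  unfolding meixner_def Dc_def sum_distrib_left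
  by (rule sum.cong) (auto simp: field_simps)

lemma Dc_zero: "n < k \<Longrightarrow> Dc n \<beta> c k = 0"
  unfolding Dc_def by (auto simp: pochhammer_eq_0_iff)

lemma meixner_Dc_lt:
  assumes "n < N"
  shows "meixner n \<beta> c x = (\<Sum>k<N. Dc n \<beta> c k * pochhammer (- x) k)"
proof -
  have "(\<Sum>k<N. Dc n \<beta> c k * pochhammer (- x) k) = (\<Sum>k=0..n. Dc n \<beta> c k * pochhammer (- x) k)"
    by (rule sum.mono_neutral_right) (use assms in \<open>auto simp: Dc_zero\<close>)
  then show ?thesis by (simp add: meixner_Dc)
qed

definition mpoly :: "nat \<Rightarrow> real \<Rightarrow> real \<Rightarrow> real poly" where
  "mpoly n \<beta> c = (\<Sum>k\<le>n. smult (Dc n \<beta> c k) (pochhammer [:0, -1:] k))"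

lemma poly_pochhammer: "poly (pochhammer p k) x = pochhammer (poly p x) k"
  by (induction k) (auto simp: pochhammer_Suc)

lemma poly_mpoly: "poly (mpoly n \<beta> c) x = meixner n \<beta> c x"
  unfolding mpoly_def meixner_Dc poly_sum
  by (auto simp: poly_pochhammer atLeast0AtMost)

lemma deg_poch: "degree (pochhammer [:0, -1::real:] k) = k \<and> lead_coeff (pochhammer [:0, -1::real:] k) = (-1)^k"
proof (induction k)
  case 0
  then show ?case by simp
next
  case (Suc k)
  have e: "[:0, -1::real:] + of_nat k = [:of_nat k, -1:]"
    by (simp add: of_nat_poly)
  have ne: "pochhammer [:0, -1::real:] k \<noteq> 0" using Suc by auto
  have e2: "pochhammer [:0, -1::real:] (Suc k) = pochhammer [:0, -1::real:] k * [:of_nat k, -1:]"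
    by (simp only: pochhammer_Suc e)
  have ne2: "[:of_nat k, -1::real:] \<noteq> 0" by simp
  have d: "degree (pochhammer [:0, -1::real:] k * [:of_nat k, -1:]) = degree (pochhammer [:0, -1::real:] k) + degree [:of_nat k, -1::real:]"
    by (rule degree_mult_eq) (use ne ne2 in auto)
  have l: "lead_coeff (pochhammer [:0, -1::real:] k * [:of_nat k, -1:]) = lead_coeff (pochhammer [:0, -1::real:] k) * lead_coeff [:of_nat k, -1::real:]"
    by (rule lead_coeff_mult)
  show ?case unfolding e2 unfolding l unfolding d using Suc by (simp, metis)
qed

lemma coeff_mpoly_gt: "n < i \<Longrightarrow> coeff (mpoly n \<beta> c) i = 0"
  unfolding mpoly_def coeff_sum
  by (intro sum.neutral) (auto intro!: coeff_eq_0 simp: deg_poch)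

lemma coeff_mpoly_n: "coeff (mpoly n \<beta> c) n = Dc n \<beta> c n * (-1)^n"
proof -
  have "coeff (mpoly n \<beta> c) n = (\<Sum>k\<le>n. Dc n \<beta> c k * coeff (pochhammer [:0, -1:] k) n)"
    unfolding mpoly_def coeff_sum by simp
  also have "\<dots> = Dc n \<beta> c n * coeff (pochhammer [:0, -1:] n) n"
    by (subst sum.remove[of _ n]) (auto intro!: sum.neutral coeff_eq_0 simp: deg_poch)
  also have "coeff (pochhammer [:0, -1::real:] n) n = (-1)^n" using deg_poch[of n] by metis
  finally show ?thesis .
qed

lemma Dc_nn:
  assumes "pochhammer \<beta> n \<noteq> 0" "c \<noteq> 0" "c \<noteq> 1"
  shows "Dc n \<beta> c n * (-1)^n = 1"
proof -
  have "pochhammer (- real n) n = (-1)^n * fact n"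
    by (simp add: pochhammer_minus pochhammer_fact)
  moreover have "(c / (c - 1)) ^ n * (1 - 1 / c) ^ n = 1"
  proof -
    have "(c / (c - 1)) * (1 - 1 / c) = 1" using assms by (simp add: field_simps)
    then show ?thesis by (metis power_mult_distrib power_one)
  qed
  ultimately show ?thesis using assms unfolding Dc_def
    by (simp add: field_simps)
qed

lemma mpoly_deg_lead:
  assumes "pochhammer \<beta> n \<noteq> 0" "c \<noteq> 0" "c \<noteq> 1"
  shows "degree (mpoly n \<beta> c) = n" "lead_coeff (mpoly n \<beta> c) = 1"
proof -
  have "coeff (mpoly n \<beta> c) n = 1" using coeff_mpoly_n Dc_nn[OF assms] by simp
  moreover have "degree (mpoly n \<beta> c) \<le> n"
    by (rule degree_le) (auto simp: coeff_mpoly_gt)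
  ultimately show d: "degree (mpoly n \<beta> c) = n"
    by (metis antisym le_degree zero_neq_one)
  show "lead_coeff (mpoly n \<beta> c) = 1" using d \<open>coeff (mpoly n \<beta> c) n = 1\<close> by simp
qed

lemma poch2: "pochhammer (a::real) (Suc (Suc j)) = pochhammer a j * (a + real j) * (a + real j + 1)"
  by (simp add: pochhammer_Suc algebra_simps)

lemma poch1: "pochhammer (a::real) (Suc j) = pochhammer a j * (a + real j)"
  by (simp add: pochhammer_Suc)

lemma pochm2: "pochhammer (- real (Suc (Suc m))) (Suc (Suc j)) = (- real m - 2) * (- real m - 1) * pochhammer (- real m) j"
  by (simp add: pochhammer_rec algebra_simps)

lemma pochm1: "pochhammer (- real (Suc m)) (Suc j) = (- real m - 1) * pochhammer (- real m) j"
  by (simp add: pochhammer_rec algebra_simps)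

lemma pochm12: "pochhammer (- real (Suc m)) (Suc (Suc j)) = (- real m - 1) * pochhammer (- real m) j * (- real m + real j)"
proof -
  have "pochhammer (- real (Suc m)) (Suc (Suc j)) = (- real m - 1) * pochhammer (- real (Suc m) + 1) (Suc j)"
    by (subst pochhammer_rec) simp
  also have "- real (Suc m) + 1 = - real m" by simp
  finally show ?thesis by (simp add: pochhammer_Suc)
qed

lemma rec_alg2:
  fixes b c M J :: real
  assumes "c \<noteq> 0" "c \<noteq> 1" "b + J \<noteq> 0" "b + J + 1 \<noteq> 0" "J + 1 \<noteq> 0" "J + 2 \<noteq> 0"
  defines "w \<equiv> c / (c - 1)" and "u \<equiv> 1 - 1 / c"
  defines "a \<equiv> (M + 1 + (M + 1 + b) * c) / (1 - c)"
    and "lam \<equiv> (M + 1) * (M + b) * c / (1 - c)^2"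
  shows "w * w * ((b + M) * (b + M + 1)) * ((- M - 2) * (- M - 1) * (u * u) / ((b + J) * (b + J + 1) * ((J + 1) * (J + 2))))
   = (J + 2 - a) * (w * (b + M) * ((- M - 1) * (- M + J) * (u * u) / ((b + J) * (b + J + 1) * ((J + 1) * (J + 2)))))
     - w * (b + M) * ((- M - 1) * u / ((b + J) * (J + 1)))
     - lam * ((- M + J) * (- M + J + 1) * (u * u) / ((b + J) * (b + J + 1) * ((J + 1) * (J + 2))))"
proof -
  have "1 - c \<noteq> 0" "c - 1 \<noteq> 0" using assms by auto
  then show ?thesis using assms(1-6) unfolding w_def u_def a_def lam_def
    apply (simp add: divide_simps power2_eq_square)
    apply (simp add: algebra_simps)
    done
qed

lemma rec_alg1:
  fixes b c M :: real
  assumes "c \<noteq> 0" "c \<noteq> 1" "b \<noteq> 0"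
  defines "w \<equiv> c / (c - 1)" and "u \<equiv> 1 - 1 / c"
  defines "a \<equiv> (M + 1 + (M + 1 + b) * c) / (1 - c)"
    and "lam \<equiv> (M + 1) * (M + b) * c / (1 - c)^2"
  shows "w * w * ((b + M) * (b + M + 1)) * ((- M - 2) * u / b)
   = (1 - a) * (w * (b + M) * ((- M - 1) * u / b)) - w * (b + M) - lam * (- M * u / b)"
proof -
  have "1 - c \<noteq> 0" "c - 1 \<noteq> 0" using assms by auto
  then show ?thesis using assms(1-3) unfolding w_def u_def a_def lam_def
    apply (simp add: divide_simps power2_eq_square)
    apply (simp add: algebra_simps)
    done
qed

lemma rec_alg0:
  fixes b c M :: real
  assumes "c \<noteq> 0" "c \<noteq> 1"
  defines "w \<equiv> c / (c - 1)"
  defines "a \<equiv> (M + 1 + (M + 1 + b) * c) / (1 - c)"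
    and "lam \<equiv> (M + 1) * (M + b) * c / (1 - c)^2"
  shows "w * w * ((b + M) * (b + M + 1)) = (0 - a) * (w * (b + M)) - lam"
proof -
  have "1 - c \<noteq> 0" "c - 1 \<noteq> 0" using assms by auto
  then show ?thesis using assms(1-2) unfolding w_def a_def lam_def
    apply (simp add: divide_simps power2_eq_square)
    apply (simp add: algebra_simps)
    done
qed

lemma rec_coeff:
  fixes b c :: real and m k :: nat
  assumes b: "b > 0" and c: "0 < c" "c < 1"
  defines "a \<equiv> (real m + 1 + (real m + 1 + b) * c) / (1 - c)"
    and "lam \<equiv> (real m + 1) * (real m + b) * c / (1 - c)^2"
  shows "Dc (Suc (Suc m)) b c k = (real k - a) * Dc (Suc m) b c k
          - (if k = 0 then 0 else Dc (Suc m) b c (k - 1)) - lam * Dc m b c k"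
proof -
  define w where "w = c / (c - 1)"
  define u where "u = 1 - 1 / c"
  have pb: "\<And>i. pochhammer b i > 0" using b by (simp add: pochhammer_pos)
  have [simp]: "c - 1 \<noteq> 0" "1 - c \<noteq> 0" "c \<noteq> 0" "c \<noteq> 1" using c by auto
  have bj[simp]: "b + real i \<noteq> 0" "b + real i + 1 \<noteq> 0" for i using b by (auto simp: add_pos_nonneg)
  have pb0[simp]: "pochhammer b i \<noteq> 0" for i using pb[of i] by simp
  define G0 where "G0 = w ^ m * pochhammer b m"
  have D0: "Dc (Suc (Suc m)) b c 0 = G0 * (w * w * ((b + real m) * (b + real m + 1)))"
     "Dc (Suc m) b c 0 = G0 * (w * (b + real m))"  "Dc m b c 0 = G0"
    unfolding Dc_def G0_def w_def by (simp_all add: poch2 poch1 algebra_simps)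
  have D1: "Dc (Suc (Suc m)) b c 1 = G0 * (w * w * ((b + real m) * (b + real m + 1)) * ((- real m - 2) * u / b))"
     "Dc (Suc m) b c 1 = G0 * (w * (b + real m) * ((- real m - 1) * u / b))"
     "Dc m b c 1 = G0 * (- real m * u / b)"
    unfolding Dc_def G0_def w_def u_def by (simp_all add: poch2 poch1 divide_simps) (simp_all add: algebra_simps)
  consider "k = 0" | "k = 1" | j where "k = Suc (Suc j)" by (metis One_nat_def not0_implies_Suc)
  then show ?thesis
  proof cases
    case 1
    have eq: "w * w * ((b + real m) * (b + real m + 1)) = (0 - a) * (w * (b + real m)) - lam"
      using rec_alg0[of c b "real m"] unfolding w_def a_def lam_def by simp
    have "Dc (Suc (Suc m)) b c k = G0 * (w * w * ((b + real m) * (b + real m + 1)))" using D0 1 by simp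
    also have "\<dots> = G0 * ((0 - a) * (w * (b + real m)) - lam)" using eq by simp
    also have "\<dots> = (real k - a) * Dc (Suc m) b c k - (if k = 0 then 0 else Dc (Suc m) b c (k - 1)) - lam * Dc m b c k" using D0 1 by (simp add: algebra_simps)
    finally show ?thesis .
  next
    case 2
    have eq: "w * w * ((b + real m) * (b + real m + 1)) * ((- real m - 2) * u / b)
   = (1 - a) * (w * (b + real m) * ((- real m - 1) * u / b)) - w * (b + real m) - lam * (- real m * u / b)"
      using rec_alg1[of c b "real m"] b unfolding w_def u_def a_def lam_def by simp
    have "Dc (Suc (Suc m)) b c k = G0 * (w * w * ((b + real m) * (b + real m + 1)) * ((- real m - 2) * u / b))" using D1 2 by simp
    also have "\<dots> = G0 * ((1 - a) * (w * (b + real m) * ((- real m - 1) * u / b)) - w * (b + real m) - lam * (- real m * u / b))" using eq by simp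
    also have "\<dots> = (real k - a) * Dc (Suc m) b c k - (if k = 0 then 0 else Dc (Suc m) b c (k - 1)) - lam * Dc m b c k" using D0 D1 2 by (simp add: algebra_simps)
    finally show ?thesis .
  next
    case 3
    define G where "G = G0 * pochhammer (- real m) j * u ^ j / (pochhammer b j * fact j)"
    have E1: "Dc (Suc (Suc m)) b c (Suc (Suc j)) = G * (w * w * ((b + real m) * (b + real m + 1)) * ((- real m - 2) * (- real m - 1) * (u * u) / ((b + real j) * (b + real j + 1) * ((real j + 1) * (real j + 2)))))"
      unfolding Dc_def G_def G0_def w_def u_def
      apply (subst pochm2)
      apply (simp only: poch2 poch1 fact_Suc power_Suc)
      apply (simp add: divide_simps add_pos_nonneg add_nonneg_pos b less_imp_neq[symmetric])
      apply ((simp add: algebra_simps)?)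
      done
    have E2: "Dc (Suc m) b c (Suc (Suc j)) = G * (w * (b + real m) * ((- real m - 1) * (- real m + real j) * (u * u) / ((b + real j) * (b + real j + 1) * ((real j + 1) * (real j + 2)))))"
      unfolding Dc_def G_def G0_def w_def u_def
      apply (subst pochm12)
      apply (simp only: poch2 poch1 fact_Suc power_Suc)
      apply (simp add: divide_simps add_pos_nonneg add_nonneg_pos b less_imp_neq[symmetric])
      apply ((simp add: algebra_simps)?)
      done
    have E3: "Dc (Suc m) b c (Suc j) = G * (w * (b + real m) * ((- real m - 1) * u / ((b + real j) * (real j + 1))))"
      unfolding Dc_def G_def G0_def w_def u_def
      apply (subst pochm1)
      apply (simp only: poch2 poch1 fact_Suc power_Suc)
      apply (simp add: divide_simps add_pos_nonneg add_nonneg_pos b less_imp_neq[symmetric])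
      apply ((simp add: algebra_simps)?)
      done
    have E4: "Dc m b c (Suc (Suc j)) = G * ((- real m + real j) * (- real m + real j + 1) * (u * u) / ((b + real j) * (b + real j + 1) * ((real j + 1) * (real j + 2))))"
      unfolding Dc_def G_def G0_def w_def u_def
      apply (simp only: poch2 poch1 fact_Suc power_Suc)
      apply (simp add: divide_simps add_pos_nonneg add_nonneg_pos b less_imp_neq[symmetric])
      apply ((simp add: algebra_simps)?)
      done
    note E = E1 E2 E3 E4
    have bj': "b + real j \<noteq> 0" "b + real j + 1 \<noteq> 0" by simp_all
    have eq: "w * w * ((b + real m) * (b + real m + 1)) * ((- real m - 2) * (- real m - 1) * (u * u) / ((b + real j) * (b + real j + 1) * ((real j + 1) * (real j + 2))))
   = (real j + 2 - a) * (w * (b + real m) * ((- real m - 1) * (- real m + real j) * (u * u) / ((b + real j) * (b + real j + 1) * ((real j + 1) * (real j + 2)))))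
     - w * (b + real m) * ((- real m - 1) * u / ((b + real j) * (real j + 1)))
     - lam * ((- real m + real j) * (- real m + real j + 1) * (u * u) / ((b + real j) * (b + real j + 1) * ((real j + 1) * (real j + 2))))"
      using rec_alg2[of c b "real j" "real m"] bj' unfolding w_def u_def a_def lam_def by simp
    have "Dc (Suc (Suc m)) b c k = G * (w * w * ((b + real m) * (b + real m + 1)) * ((- real m - 2) * (- real m - 1) * (u * u) / ((b + real j) * (b + real j + 1) * ((real j + 1) * (real j + 2)))))"
      using E 3 by simp
    also have "\<dots> = G * ((real j + 2 - a) * (w * (b + real m) * ((- real m - 1) * (- real m + real j) * (u * u) / ((b + real j) * (b + real j + 1) * ((real j + 1) * (real j + 2)))))
     - w * (b + real m) * ((- real m - 1) * u / ((b + real j) * (real j + 1)))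
     - lam * ((- real m + real j) * (- real m + real j + 1) * (u * u) / ((b + real j) * (b + real j + 1) * ((real j + 1) * (real j + 2)))))"
      using eq by simp
    also have "\<dots> = (real k - a) * Dc (Suc m) b c k - (if k = 0 then 0 else Dc (Suc m) b c (k - 1)) - lam * Dc m b c k" using E 3 by (simp add: algebra_simps)
    finally show ?thesis .
  qed
qed

lemma x_poch: "x * pochhammer (- x) k = real k * pochhammer (- x) k - pochhammer (- x) (Suc k)"
  by (simp add: pochhammer_Suc algebra_simps)

lemma shift_sum:
  fixes D :: "nat \<Rightarrow> real"
  assumes "D N = 0"
  shows "(\<Sum>k<Suc N. D k * pochhammer (- x) (Suc k)) = (\<Sum>k<Suc N. (if k = 0 then 0 else D (k - 1)) * pochhammer (- x) k)"
proof -
  have "(\<Sum>k<Suc (Suc N). (if k = 0 then 0 else D (k - 1)) * pochhammer (- x) k)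
      = (\<Sum>k<Suc N. D k * pochhammer (- x) (Suc k))"
    by (subst sum.lessThan_Suc_shift) simp
  moreover have "(\<Sum>k<Suc (Suc N). (if k = 0 then 0 else D (k - 1)) * pochhammer (- x) k)
      = (\<Sum>k<Suc N. (if k = 0 then 0 else D (k - 1)) * pochhammer (- x) k)"
    using assms by simp
  ultimately show ?thesis by simp
qed

lemma meixner_rec:
  fixes b c x :: real and m :: nat
  assumes b: "b > 0" and c: "0 < c" "c < 1"
  defines "a \<equiv> (real m + 1 + (real m + 1 + b) * c) / (1 - c)"
    and "lam \<equiv> (real m + 1) * (real m + b) * c / (1 - c)^2"
  shows "meixner (Suc (Suc m)) b c x = (x - a) * meixner (Suc m) b c x - lam * meixner m b c x"
proof -
  define N where "N = Suc (Suc m)"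
  let ?p = "\<lambda>k. pochhammer (- x) k"
  have Q2: "meixner (Suc (Suc m)) b c x = (\<Sum>k<Suc N. Dc (Suc (Suc m)) b c k * ?p k)"
    by (rule meixner_Dc_lt) (simp add: N_def)
  have Q1: "meixner (Suc m) b c x = (\<Sum>k<Suc N. Dc (Suc m) b c k * ?p k)"
    by (rule meixner_Dc_lt) (simp add: N_def)
  have Q0: "meixner m b c x = (\<Sum>k<Suc N. Dc m b c k * ?p k)"
    by (rule meixner_Dc_lt) (simp add: N_def)
  have xQ1: "x * meixner (Suc m) b c x = (\<Sum>k<Suc N. (real k * Dc (Suc m) b c k - (if k = 0 then 0 else Dc (Suc m) b c (k - 1))) * ?p k)"
  proof -
    have "x * meixner (Suc m) b c x = (\<Sum>k<Suc N. Dc (Suc m) b c k * (real k * ?p k - ?p (Suc k)))"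
      unfolding Q1 sum_distrib_left by (rule sum.cong) (auto simp: x_poch[symmetric] algebra_simps)
    also have "\<dots> = (\<Sum>k<Suc N. real k * Dc (Suc m) b c k * ?p k) - (\<Sum>k<Suc N. Dc (Suc m) b c k * ?p (Suc k))"
      by (simp add: sum_subtractf algebra_simps)
    also have "(\<Sum>k<Suc N. Dc (Suc m) b c k * ?p (Suc k)) = (\<Sum>k<Suc N. (if k = 0 then 0 else Dc (Suc m) b c (k - 1)) * ?p k)"
      by (rule shift_sum) (simp add: N_def Dc_zero)
    finally show ?thesis by (simp add: sum_subtractf algebra_simps)
  qed
  have "meixner (Suc (Suc m)) b c x - ((x - a) * meixner (Suc m) b c x - lam * meixner m b c x)
     = (\<Sum>k<Suc N. (Dc (Suc (Suc m)) b c k - ((real k - a) * Dc (Suc m) b c k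
          - (if k = 0 then 0 else Dc (Suc m) b c (k - 1)) - lam * Dc m b c k)) * ?p k)"
    unfolding left_diff_distrib xQ1 Q2 Q0
    by (simp add: Q1 sum_subtractf sum_distrib_left algebra_simps sum.distrib)
  also have "\<dots> = 0"
    using rec_coeff[OF b c, of m] unfolding a_def lam_def by simp
  finally show ?thesis by simp
qed

lemma pochb2: "pochhammer (a::real) (Suc (Suc n)) = a * (a + 1) * pochhammer (a + 2) n"
  by (simp add: pochhammer_rec algebra_simps)

lemma dec_alg2:
  fixes be c M J :: real
  assumes "c \<noteq> 0" "c \<noteq> 1" "be + 2 + J \<noteq> 0" "be + 2 + J + 1 \<noteq> 0" "J + 1 \<noteq> 0" "J + 2 \<noteq> 0"
  defines "w \<equiv> c / (c - 1)" and "u \<equiv> 1 - 1 / c"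
  defines "e \<equiv> 2 * (M + 2) * c / (1 - c)"
    and "f \<equiv> (M + 2) * (M + 1) * c^2 / (1 - c)^2"
  shows "w * w * ((- M - 2) * (- M - 1) * (u * u) / ((J + 1) * (J + 2)))
   = w * w * ((be + 2 + M) * (be + 2 + M + 1)) * ((- M - 2) * (- M - 1) * (u * u) / ((be + 2 + J) * (be + 2 + J + 1) * ((J + 1) * (J + 2))))
     + e * (w * (be + 2 + M) * ((- M - 1) * (- M + J) * (u * u) / ((be + 2 + J) * (be + 2 + J + 1) * ((J + 1) * (J + 2)))))
     + f * ((- M + J) * (- M + J + 1) * (u * u) / ((be + 2 + J) * (be + 2 + J + 1) * ((J + 1) * (J + 2))))"
proof -
  have "1 - c \<noteq> 0" "c - 1 \<noteq> 0" using assms by auto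
  then show ?thesis using assms(1-6) unfolding w_def u_def e_def f_def
    apply (simp add: divide_simps power2_eq_square)
    apply (simp add: algebra_simps)
    done
qed

lemma dec_alg1:
  fixes be c M :: real
  assumes "c \<noteq> 0" "c \<noteq> 1" "be + 2 \<noteq> 0"
  defines "w \<equiv> c / (c - 1)" and "u \<equiv> 1 - 1 / c"
  defines "e \<equiv> 2 * (M + 2) * c / (1 - c)"
    and "f \<equiv> (M + 2) * (M + 1) * c^2 / (1 - c)^2"
  shows "w * w * ((be + 1) * (- M - 2) * u)
   = w * w * ((be + 2 + M) * (be + 2 + M + 1)) * ((- M - 2) * u / (be + 2))
     + e * (w * (be + 2 + M) * ((- M - 1) * u / (be + 2))) + f * (- M * u / (be + 2))"
proof -
  have "1 - c \<noteq> 0" "c - 1 \<noteq> 0" using assms by auto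
  then show ?thesis using assms(1-3) unfolding w_def u_def e_def f_def
    apply (simp add: divide_simps power2_eq_square)
    apply (simp add: algebra_simps)
    done
qed

lemma dec_alg0:
  fixes be c M :: real
  assumes "c \<noteq> 0" "c \<noteq> 1"
  defines "w \<equiv> c / (c - 1)"
  defines "e \<equiv> 2 * (M + 2) * c / (1 - c)"
    and "f \<equiv> (M + 2) * (M + 1) * c^2 / (1 - c)^2"
  shows "w * w * (be * (be + 1)) = w * w * ((be + 2 + M) * (be + 2 + M + 1)) + e * (w * (be + 2 + M)) + f"
proof -
  have "1 - c \<noteq> 0" "c - 1 \<noteq> 0" using assms by auto
  then show ?thesis using assms(1-2) unfolding w_def e_def f_def
    apply (simp add: divide_simps power2_eq_square)
    apply (simp add: algebra_simps)
    done
qed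

lemma dec_coeff:
  fixes be c :: real and m k :: nat
  assumes be: "-2 < be" "be < -1" and c: "0 < c" "c < 1"
  defines "e \<equiv> 2 * (real m + 2) * c / (1 - c)"
    and "f \<equiv> (real m + 2) * (real m + 1) * c^2 / (1 - c)^2"
  shows "Dc (Suc (Suc m)) be c k = Dc (Suc (Suc m)) (be + 2) c k + e * Dc (Suc m) (be + 2) c k + f * Dc m (be + 2) c k"
proof -
  define w where "w = c / (c - 1)"
  define u where "u = 1 - 1 / c"
  have b: "be + 2 > 0" using be by simp
  have pb: "\<And>i. pochhammer (be + 2) i > 0" using b by (simp add: pochhammer_pos)
  have [simp]: "c - 1 \<noteq> 0" "1 - c \<noteq> 0" "c \<noteq> 0" "c \<noteq> 1" using c by auto
  have bj[simp]: "be + 2 + real i \<noteq> 0" "be + 2 + real i + 1 \<noteq> 0" for i using b by (auto simp: add_pos_nonneg)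
  have [simp]: "be \<noteq> 0" "be + 1 \<noteq> 0" "be + 2 \<noteq> 0" using be by auto
  have pb0[simp]: "pochhammer (be + 2) i \<noteq> 0" for i using pb[of i] by simp
  define G0 where "G0 = w ^ m * pochhammer (be + 2) m"
  have D0a: "Dc (Suc (Suc m)) be c 0 = G0 * (w * w * (be * (be + 1)))"
    unfolding Dc_def G0_def w_def by (simp add: pochb2 algebra_simps)
  have D1a: "Dc (Suc (Suc m)) be c 1 = G0 * (w * w * ((be + 1) * (- real m - 2) * u))"
    unfolding Dc_def G0_def w_def u_def
    apply (simp add: pochb2 divide_simps)
    apply ((simp add: algebra_simps)?)
    done
  have D0: "Dc (Suc (Suc m)) (be + 2) c 0 = G0 * (w * w * ((be + 2 + real m) * (be + 2 + real m + 1)))"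
     "Dc (Suc m) (be + 2) c 0 = G0 * (w * (be + 2 + real m))"  "Dc m (be + 2) c 0 = G0"
    unfolding Dc_def G0_def w_def by (simp_all add: poch2 poch1 algebra_simps)
  have D1: "Dc (Suc (Suc m)) (be + 2) c 1 = G0 * (w * w * ((be + 2 + real m) * (be + 2 + real m + 1)) * ((- real m - 2) * u / (be + 2)))"
     "Dc (Suc m) (be + 2) c 1 = G0 * (w * (be + 2 + real m) * ((- real m - 1) * u / (be + 2)))"
     "Dc m (be + 2) c 1 = G0 * (- real m * u / (be + 2))"
    unfolding Dc_def G0_def w_def u_def by (simp_all add: poch2 poch1 divide_simps)
  consider "k = 0" | "k = 1" | j where "k = Suc (Suc j)" by (metis One_nat_def not0_implies_Suc)
  then show ?thesis
  proof cases
    case 1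
    have eq: "w * w * (be * (be + 1)) = w * w * ((be + 2 + real m) * (be + 2 + real m + 1)) + e * (w * (be + 2 + real m)) + f"
      using dec_alg0[of c be "real m"] unfolding w_def e_def f_def by simp
    have "Dc (Suc (Suc m)) be c k = G0 * (w * w * (be * (be + 1)))" using D0a 1 by simp
    also have "\<dots> = G0 * (w * w * ((be + 2 + real m) * (be + 2 + real m + 1)) + e * (w * (be + 2 + real m)) + f)" using eq by simp
    also have "\<dots> = Dc (Suc (Suc m)) (be + 2) c k + e * Dc (Suc m) (be + 2) c k + f * Dc m (be + 2) c k" using D0 1 by (simp add: algebra_simps)
    finally show ?thesis .
  next
    case 2
    have eq: "w * w * ((be + 1) * (- real m - 2) * u)
   = w * w * ((be + 2 + real m) * (be + 2 + real m + 1)) * ((- real m - 2) * u / (be + 2))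
     + e * (w * (be + 2 + real m) * ((- real m - 1) * u / (be + 2))) + f * (- real m * u / (be + 2))"
      using dec_alg1[of c be "real m"] unfolding w_def u_def e_def f_def by simp
    have "Dc (Suc (Suc m)) be c k = G0 * (w * w * ((be + 1) * (- real m - 2) * u))" using D1a 2 by simp
    also have "\<dots> = G0 * (w * w * ((be + 2 + real m) * (be + 2 + real m + 1)) * ((- real m - 2) * u / (be + 2))
     + e * (w * (be + 2 + real m) * ((- real m - 1) * u / (be + 2))) + f * (- real m * u / (be + 2)))" using eq by simp
    also have "\<dots> = Dc (Suc (Suc m)) (be + 2) c k + e * Dc (Suc m) (be + 2) c k + f * Dc m (be + 2) c k" using D1 2 by (simp add: algebra_simps)
    finally show ?thesis .
  next
    case 3
    define G where "G = G0 * pochhammer (- real m) j * u ^ j / (pochhammer (be + 2) j * fact j)"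
    have E0: "Dc (Suc (Suc m)) be c (Suc (Suc j)) = G * (w * w * ((- real m - 2) * (- real m - 1) * (u * u) / ((real j + 1) * (real j + 2))))"
      unfolding Dc_def G_def G0_def w_def u_def
      apply (subst pochm2)
      apply (simp only: pochb2 fact_Suc power_Suc)
      apply (simp add: divide_simps add_pos_nonneg add_nonneg_pos b less_imp_neq[symmetric])
      apply ((simp add: algebra_simps)?)
      done
    have E1: "Dc (Suc (Suc m)) (be + 2) c (Suc (Suc j)) = G * (w * w * ((be + 2 + real m) * (be + 2 + real m + 1)) * ((- real m - 2) * (- real m - 1) * (u * u) / ((be + 2 + real j) * (be + 2 + real j + 1) * ((real j + 1) * (real j + 2)))))"
      unfolding Dc_def G_def G0_def w_def u_def
      apply (subst pochm2)
      apply (simp only: poch2 poch1 fact_Suc power_Suc)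
      apply (simp add: divide_simps add_pos_nonneg add_nonneg_pos b less_imp_neq[symmetric])
      apply ((simp add: algebra_simps)?)
      done
    have E2: "Dc (Suc m) (be + 2) c (Suc (Suc j)) = G * (w * (be + 2 + real m) * ((- real m - 1) * (- real m + real j) * (u * u) / ((be + 2 + real j) * (be + 2 + real j + 1) * ((real j + 1) * (real j + 2)))))"
      unfolding Dc_def G_def G0_def w_def u_def
      apply (subst pochm12)
      apply (simp only: poch2 poch1 fact_Suc power_Suc)
      apply (simp add: divide_simps add_pos_nonneg add_nonneg_pos b less_imp_neq[symmetric])
      apply ((simp add: algebra_simps)?)
      done
    have E4: "Dc m (be + 2) c (Suc (Suc j)) = G * ((- real m + real j) * (- real m + real j + 1) * (u * u) / ((be + 2 + real j) * (be + 2 + real j + 1) * ((real j + 1) * (real j + 2))))"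
      unfolding Dc_def G_def G0_def w_def u_def
      apply (simp only: poch2 poch1 fact_Suc power_Suc)
      apply (simp add: divide_simps add_pos_nonneg add_nonneg_pos b less_imp_neq[symmetric])
      apply ((simp add: algebra_simps)?)
      done
    have bj': "be + 2 + real j \<noteq> 0" "be + 2 + real j + 1 \<noteq> 0" by (fact bj)+
    have eq: "w * w * ((- real m - 2) * (- real m - 1) * (u * u) / ((real j + 1) * (real j + 2)))
   = w * w * ((be + 2 + real m) * (be + 2 + real m + 1)) * ((- real m - 2) * (- real m - 1) * (u * u) / ((be + 2 + real j) * (be + 2 + real j + 1) * ((real j + 1) * (real j + 2))))
     + e * (w * (be + 2 + real m) * ((- real m - 1) * (- real m + real j) * (u * u) / ((be + 2 + real j) * (be + 2 + real j + 1) * ((real j + 1) * (real j + 2)))))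
     + f * ((- real m + real j) * (- real m + real j + 1) * (u * u) / ((be + 2 + real j) * (be + 2 + real j + 1) * ((real j + 1) * (real j + 2))))"
      using dec_alg2[of c be "real j" "real m"] bj' unfolding w_def u_def e_def f_def by simp
    have "Dc (Suc (Suc m)) be c k = G * (w * w * ((- real m - 2) * (- real m - 1) * (u * u) / ((real j + 1) * (real j + 2))))"
      using E0 3 by simp
    also have "\<dots> = G * (w * w * ((be + 2 + real m) * (be + 2 + real m + 1)) * ((- real m - 2) * (- real m - 1) * (u * u) / ((be + 2 + real j) * (be + 2 + real j + 1) * ((real j + 1) * (real j + 2))))
     + e * (w * (be + 2 + real m) * ((- real m - 1) * (- real m + real j) * (u * u) / ((be + 2 + real j) * (be + 2 + real j + 1) * ((real j + 1) * (real j + 2)))))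
     + f * ((- real m + real j) * (- real m + real j + 1) * (u * u) / ((be + 2 + real j) * (be + 2 + real j + 1) * ((real j + 1) * (real j + 2)))))"
      using eq by simp
    also have "\<dots> = Dc (Suc (Suc m)) (be + 2) c k + e * Dc (Suc m) (be + 2) c k + f * Dc m (be + 2) c k" using E1 E2 E4 3 by (simp add: algebra_simps)
    finally show ?thesis .
  qed
qed

lemma meixner_dec:
  fixes be c x :: real and m :: nat
  assumes be: "-2 < be" "be < -1" and c: "0 < c" "c < 1"
  defines "e \<equiv> 2 * (real m + 2) * c / (1 - c)"
    and "f \<equiv> (real m + 2) * (real m + 1) * c^2 / (1 - c)^2"
  shows "meixner (Suc (Suc m)) be c x = meixner (Suc (Suc m)) (be + 2) c x + e * meixner (Suc m) (be + 2) c x + f * meixner m (be + 2) c x"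
proof -
  define N where "N = Suc (Suc (Suc m))"
  have "meixner (Suc (Suc m)) be c x = (\<Sum>k<N. Dc (Suc (Suc m)) be c k * pochhammer (- x) k)"
    by (rule meixner_Dc_lt) (simp add: N_def)
  also have "\<dots> = (\<Sum>k<N. (Dc (Suc (Suc m)) (be + 2) c k + e * Dc (Suc m) (be + 2) c k + f * Dc m (be + 2) c k) * pochhammer (- x) k)"
    using dec_coeff[OF be c, of m] unfolding e_def f_def by simp
  also have "\<dots> = (\<Sum>k<N. Dc (Suc (Suc m)) (be + 2) c k * pochhammer (- x) k) + e * (\<Sum>k<N. Dc (Suc m) (be + 2) c k * pochhammer (- x) k)
     + f * (\<Sum>k<N. Dc m (be + 2) c k * pochhammer (- x) k)"
    by (simp add: sum.distrib sum_distrib_left algebra_simps)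
  also have "\<dots> = meixner (Suc (Suc m)) (be + 2) c x + e * meixner (Suc m) (be + 2) c x + f * meixner m (be + 2) c x"
    by (subst (1 2 3) meixner_Dc_lt[where N=N]) (simp_all add: N_def)
  finally show ?thesis .
qed

lemma meixner_0_eq: "meixner 0 b c x = 1"
  unfolding meixner_def by simp

lemma meixner_at0: "meixner n b c 0 = (c / (c - 1)) ^ n * pochhammer b n"
proof -
  have "meixner n b c 0 = (\<Sum>k\<in>{0}. Dc n b c k * pochhammer (- 0) k)"
    unfolding meixner_Dc by (rule sum.mono_neutral_right) (auto simp: pochhammer_0_left)
  then show ?thesis by (simp add: Dc_def)
qed

lemma meixner_at0_sign:
  assumes "0 < c" "c < 1" "pochhammer b n > 0"
  shows "(-1) ^ n * meixner n b c 0 > 0"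
proof -
  have "(-1) ^ n * meixner n b c 0 = (c / (1 - c)) ^ n * pochhammer b n"
    unfolding meixner_at0 using assms
    apply (simp add: power_mult_distrib[symmetric] divide_simps)
    apply ((simp add: algebra_simps)?)
    done
  then show ?thesis using assms by simp
qed

lemma prod_roots:
  fixes p :: "real poly"
  assumes "lead_coeff p = 1" "card {x. poly p x = 0} = degree p"
  shows "poly p y = (\<Prod>r\<in>{x. poly p x = 0}. (y - r))"
  using assms
proof (induction "degree p" arbitrary: p)
  case 0
  have "coeff p (degree p) = 1" using 0(2) .
  then have "coeff p 0 = 1" unfolding 0(1)[symmetric] .
  then have "p = [:1:]" using degree_0_id[OF 0(1)[symmetric]] by simp
  then show ?case by simp
next
  case (Suc d)
  have p0: "p \<noteq> 0" using Suc.hyps(2) by auto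
  have "card {x. poly p x = 0} > 0" using Suc.prems(2) Suc.hyps(2) by simp
  then have "{x. poly p x = 0} \<noteq> {}" by (metis card.empty less_irrefl)
  then obtain r where r: "poly p r = 0" by auto
  then obtain q where pq: "p = [:- r, 1:] * q" using poly_eq_0_iff_dvd by blast
  have q0: "q \<noteq> 0" using p0 pq by auto
  have "degree p = degree [:- r, 1:] + degree q" unfolding pq by (rule degree_mult_eq) (use q0 in auto)
  then have dq: "degree q = d" using Suc.hyps(2) by simp
  have "lead_coeff p = lead_coeff [:- r, 1:] * lead_coeff q" unfolding pq by (rule lead_coeff_mult)
  then have lq: "lead_coeff q = 1" using Suc.prems(1) by simp
  have pp: "poly p x = (x - r) * poly q x" for x
  proof -
    have "poly p x = poly [:- r, 1:] x * poly q x" unfolding pq by (rule poly_mult)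
    then show ?thesis by simp
  qed
  have rp: "{x. poly p x = 0} = insert r {x. poly q x = 0}" using pp by auto
  have fq: "finite {x. poly q x = 0}" using q0 poly_roots_finite by blast
  have cq: "card {x. poly q x = 0} \<le> d" using card_poly_roots_bound[OF q0] dq by simp
  have rq: "r \<notin> {x. poly q x = 0}"
  proof
    assume "r \<in> {x. poly q x = 0}"
    then have "{x. poly p x = 0} = {x. poly q x = 0}" using rp by auto
    then show False using Suc.prems(2) Suc.hyps(2) cq by simp
  qed
  have cq': "card {x. poly q x = 0} = degree q"
    using Suc.prems(2) Suc.hyps(2) rp rq fq dq by simp
  have IH: "poly q y = (\<Prod>r\<in>{x. poly q x = 0}. (y - r))"
    using Suc.hyps(1)[OF dq[symmetric] lq cq'] .
  show ?case unfolding rp using fq rq IH pp by simp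
qed

lemma prod_sign:
  fixes S :: "real set"
  assumes "finite S" "y \<notin> S"
  shows "(-1) ^ card {r\<in>S. y < r} * (\<Prod>r\<in>S. (y - r)) > 0"
  using assms
proof (induction S rule: finite_induct)
  case empty
  then show ?case by simp
next
  case (insert a S)
  have fin: "finite {r\<in>S. y < r}" using insert by simp
  have IH: "(-1) ^ card {r\<in>S. y < r} * (\<Prod>r\<in>S. (y - r)) > 0" using insert.IH insert.prems by simp
  show ?case
  proof (cases "y < a")
    case True
    have "{r\<in>insert a S. y < r} = insert a {r\<in>S. y < r}" using True by auto
    then have "card {r\<in>insert a S. y < r} = Suc (card {r\<in>S. y < r})" using fin insert by simp
    then have "(-1) ^ card {r\<in>insert a S. y < r} * (\<Prod>r\<in>insert a S. (y - r))
       = (a - y) * ((-1) ^ card {r\<in>S. y < r} * (\<Prod>r\<in>S. (y - r)))" using insert by (simp add: algebra_simps)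
    moreover have "(a - y) * ((-1) ^ card {r\<in>S. y < r} * (\<Prod>r\<in>S. (y - r))) > 0"
      using IH True by simp
    ultimately show ?thesis by (simp only:)
  next
    case False
    have e: "{r\<in>insert a S. y < r} = {r\<in>S. y < r}" using False by auto
    have "y \<noteq> a" using insert.prems by auto
    then have ay: "a < y" using False by linarith
    have pe: "(\<Prod>r\<in>insert a S. (y - r)) = (y - a) * (\<Prod>r\<in>S. (y - r))"
      using insert.hyps by simp
    have "(-1) ^ card {r\<in>insert a S. y < r} * (\<Prod>r\<in>insert a S. (y - r))
       = (y - a) * ((-1) ^ card {r\<in>S. y < r} * (\<Prod>r\<in>S. (y - r)))" unfolding e pe by (simp add: algebra_simps)
    moreover have "(y - a) * ((-1) ^ card {r\<in>S. y < r} * (\<Prod>r\<in>S. (y - r))) > 0"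
      using IH ay by simp
    ultimately show ?thesis by (simp only:)
  qed
qed

lemma poly_sign:
  fixes p :: "real poly"
  assumes "lead_coeff p = 1" "card {x. poly p x = 0} = degree p" "poly p y \<noteq> 0"
  shows "(-1) ^ card {r\<in>{x. poly p x = 0}. y < r} * poly p y > 0"
proof -
  have p0: "p \<noteq> 0" using assms by auto
  have f: "finite {x. poly p x = 0}" using poly_roots_finite[OF p0] .
  have "y \<notin> {x. poly p x = 0}" using assms(3) by simp
  from prod_sign[OF f this] show ?thesis unfolding prod_roots[OF assms(1,2), of y, symmetric] .
qed

lemma t_mono:
  fixes t :: "nat \<Rightarrow> real"
  assumes "\<forall>i<N. t i < t (Suc i)" "i < j" "j \<le> N"
  shows "t i < t j"
  using assms(2,3)
proof (induction j)
  case 0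
  then show ?case by simp
next
  case (Suc j)
  show ?case
  proof (cases "i = j")
    case True
    then show ?thesis using assms(1) Suc.prems by simp
  next
    case False
    then have "t i < t j" using Suc by simp
    also have "t j < t (Suc j)" using assms(1) Suc.prems by simp
    finally show ?thesis .
  qed
qed

lemma alt_sign:
  fixes A B :: real
  assumes "(-1) ^ Suc k * A > 0" "(-1) ^ k * B > 0"
  shows "A * B < 0"
proof (cases "even k")
  case True
  then have "A < 0" "B > 0" using assms by simp_all
  then show ?thesis by (simp add: mult_neg_pos)
next
  case False
  then have "A > 0" "B < 0" using assms by simp_all
  then show ?thesis by (simp add: mult_pos_neg)
qed

lemma roots_construct:
  fixes p :: "real poly" and t :: "nat \<Rightarrow> real"
  assumes dp: "degree p = N" and p0: "p \<noteq> 0" and tinc: "\<forall>i<N. t i < t (Suc i)"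
    and sg: "\<forall>i\<le>N. (-1) ^ (N - i) * poly p (t i) > 0"
  shows "length (sorted_list_of_set {x. poly p x = 0}) = N \<and> card {x. poly p x = 0} = N \<and>
    (\<forall>i<N. t i < sorted_list_of_set {x. poly p x = 0} ! i \<and> sorted_list_of_set {x. poly p x = 0} ! i < t (Suc i))"
proof -
  have "\<forall>i<N. \<exists>z. t i < z \<and> z < t (Suc i) \<and> poly p z = 0"
  proof (intro allI impI)
    fix i assume i: "i < N"
    have "N - i = Suc (N - Suc i)" using i by simp
    then have "poly p (t i) * poly p (t (Suc i)) < 0"
      using sg i by (intro alt_sign[of "N - Suc i"]) (metis less_imp_le Suc_leI)+
    then show "\<exists>z. t i < z \<and> z < t (Suc i) \<and> poly p z = 0"
      using poly_IVT[of "t i" "t (Suc i)" p] tinc i by auto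
  qed
  then obtain z where z: "\<forall>i<N. t i < z i \<and> z i < t (Suc i) \<and> poly p (z i) = 0" by metis
  define L where "L = map z [0..<N]"
  have lenL: "length L = N" unfolding L_def by simp
  have sL: "sorted_wrt (<) L"
    unfolding sorted_wrt_iff_nth_less
  proof (intro allI impI)
    fix i j assume ij: "i < j" "j < length L"
    have "z i < t (Suc i)" using z ij lenL by simp
    also have "t (Suc i) \<le> t j"
    proof (cases "Suc i = j")
      case True then show ?thesis by simp
    next
      case False then show ?thesis using t_mono[OF tinc, of "Suc i" j] ij lenL by simp
    qed
    also have "t j < z j" using z ij lenL by simp
    finally show "L ! i < L ! j" unfolding L_def using ij lenL by simp
  qed
  have dL: "distinct L" using sL strict_sorted_iff by blast
  have sub: "set L \<subseteq> {x. poly p x = 0}" unfolding L_def using z by auto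
  have fin: "finite {x. poly p x = 0}" using poly_roots_finite[OF p0] .
  have cL: "card (set L) = N" using distinct_card[OF dL] lenL by simp
  have cR: "card {x. poly p x = 0} \<le> N" using card_poly_roots_bound[OF p0] dp by simp
  have eq: "set L = {x. poly p x = 0}"
    using card_subset_eq[OF fin sub] cL cR card_mono[OF fin sub] by simp
  have sl: "sorted_list_of_set {x. poly p x = 0} = L"
    using sorted_list_of_set_unique[of "{x. poly p x = 0}" L] fin sL eq cL lenL by simp
  show ?thesis unfolding sl using lenL cL eq z unfolding L_def by auto
qed

lemma count_above:
  fixes ys :: "real list"
  assumes s: "sorted_wrt (<) ys" and i: "i \<le> length ys"
    and lo: "\<forall>k<i. ys ! k < y" and hi: "\<forall>k. i \<le> k \<longrightarrow> k < length ys \<longrightarrow> y < ys ! k"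
  shows "card {r\<in>set ys. y < r} = length ys - i"
proof -
  have d: "distinct ys" using s strict_sorted_iff by blast
  have "{r\<in>set ys. y < r} = (\<lambda>k. ys ! k) ` {i..<length ys}"
  proof (intro equalityI subsetI)
    fix r assume "r \<in> {r\<in>set ys. y < r}"
    then obtain k where k: "k < length ys" "r = ys ! k" "y < r" by (auto simp: in_set_conv_nth)
    have "i \<le> k" using lo k by (metis not_le less_asym)
    then show "r \<in> (\<lambda>k. ys ! k) ` {i..<length ys}" using k by auto
  next
    fix r assume "r \<in> (\<lambda>k. ys ! k) ` {i..<length ys}"
    then obtain k where k: "i \<le> k" "k < length ys" "r = ys ! k" by auto
    then show "r \<in> {r\<in>set ys. y < r}" using hi by auto
  qed
  moreover have "inj_on (\<lambda>k. ys ! k) {i..<length ys}"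
    using d by (auto simp: inj_on_def nth_eq_iff_index_eq)
  ultimately show ?thesis by (simp add: card_image)
qed

lemma sign_between:
  fixes p :: "real poly"
  assumes lc: "lead_coeff p = 1" and cd: "card {x. poly p x = 0} = degree p"
    and ys: "ys = sorted_list_of_set {x. poly p x = 0}" and i: "i \<le> length ys"
    and lo: "\<forall>k<i. ys ! k < y" and hi: "\<forall>k. i \<le> k \<longrightarrow> k < length ys \<longrightarrow> y < ys ! k"
  shows "(-1) ^ (length ys - i) * poly p y > 0"
proof -
  have p0: "p \<noteq> 0" using lc by auto
  have fin: "finite {x. poly p x = 0}" using poly_roots_finite[OF p0] .
  have setys: "set ys = {x. poly p x = 0}" using ys fin by simp
  have s: "sorted_wrt (<) ys" using ys by simp
  have "y \<notin> set ys"
  proof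
    assume "y \<in> set ys"
    then obtain k where "k < length ys" "ys ! k = y" by (auto simp: in_set_conv_nth)
    then show False using lo hi by (metis less_irrefl not_le)
  qed
  then have ny: "poly p y \<noteq> 0" using setys by auto
  have "card {r\<in>set ys. y < r} = length ys - i" using count_above[OF s i lo hi] .
  then show ?thesis using poly_sign[OF lc cd ny] setys by simp
qed

lemma zl_eq: "zero_list n \<beta> c = sorted_list_of_set {x. poly (mpoly n \<beta> c) x = 0}"
  unfolding zero_list_def meixner_zeros_def poly_mpoly ..

lemma mpoly_props:
  assumes "pochhammer \<beta> n \<noteq> 0" "0 < c" "c < 1"
  shows "degree (mpoly n \<beta> c) = n" "lead_coeff (mpoly n \<beta> c) = 1" "mpoly n \<beta> c \<noteq> 0"
    "\<exists>R. \<forall>x\<ge>R. meixner n \<beta> c x \<ge> 1"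
proof -
  have c: "c \<noteq> 0" "c \<noteq> 1" using assms by auto
  show d: "degree (mpoly n \<beta> c) = n" and l: "lead_coeff (mpoly n \<beta> c) = 1"
    using mpoly_deg_lead[OF assms(1) c] by auto
  show "mpoly n \<beta> c \<noteq> 0" using l by auto
  show "\<exists>R. \<forall>x\<ge>R. meixner n \<beta> c x \<ge> 1"
    using poly_pinfty_gt_lc[of "mpoly n \<beta> c"] l by (simp add: poly_mpoly)
qed

lemma Q_roots:
  fixes b c :: real
  assumes b: "b > 0" and c: "0 < c" "c < 1"
  shows "length (zero_list (Suc k) b c) = Suc k \<and> (\<forall>i<Suc k. 0 < zero_list (Suc k) b c ! i) \<and>
     (\<forall>i<Suc k. (-1) ^ (k - i) * meixner k b c (zero_list (Suc k) b c ! i) > 0)"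
proof (induction k)
  case 0
  have pb: "pochhammer b 1 \<noteq> 0" "pochhammer b 1 > 0" using b by (simp_all add: pochhammer_pos)
  note mp = mpoly_props[OF pb(1) c]
  obtain R0 where R0: "\<forall>x\<ge>R0. meixner 1 b c x \<ge> 1" using mp(4) by blast
  define R where "R = max R0 1"
  define t where "t = (\<lambda>i::nat. if i = 0 then 0 else R)"
  have tinc: "\<forall>i<1. t i < t (Suc i)" unfolding t_def R_def by simp
  have sg: "\<forall>i\<le>1. (-1) ^ (1 - i) * poly (mpoly 1 b c) (t i) > 0"
  proof (intro allI impI)
    fix i :: nat assume "i \<le> 1"
    then consider "i = 0" | "i = 1" by linarith
    then show "(-1) ^ (1 - i) * poly (mpoly 1 b c) (t i) > 0"
    proof cases
      case 1
      then show ?thesis using meixner_at0_sign[OF c pb(2)] unfolding t_def poly_mpoly by simp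
    next
      case 2
      have "meixner 1 b c R \<ge> 1" using R0 R_def by simp
      then show ?thesis using 2 unfolding t_def poly_mpoly by simp
    qed
  qed
  have RC: "length (zero_list 1 b c) = 1 \<and> card {x. poly (mpoly 1 b c) x = 0} = 1 \<and>
    (\<forall>i<1. t i < zero_list 1 b c ! i \<and> zero_list 1 b c ! i < t (Suc i))"
    using roots_construct[OF mp(1) mp(3) tinc sg] unfolding zl_eq .
  then show ?case unfolding t_def by (simp add: meixner_0_eq)
next
  case (Suc k)
  define ys where "ys = zero_list (Suc k) b c"
  define zs where "zs = zero_list (Suc (Suc k)) b c"
  have pbn: "pochhammer b n > 0" for n using b by (simp add: pochhammer_pos)
  have pb0: "pochhammer b n \<noteq> 0" for n using pbn[of n] by simp
  note mp2 = mpoly_props[OF pb0[of "Suc (Suc k)"] c]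
  note mp1 = mpoly_props[OF pb0[of "Suc k"] c]
  have lys: "length ys = Suc k" and pos: "\<forall>i<Suc k. 0 < ys ! i"
    and sgk: "\<forall>i<Suc k. (-1) ^ (k - i) * meixner k b c (ys ! i) > 0"
    using Suc.IH unfolding ys_def by auto
  have fin1: "finite {x. poly (mpoly (Suc k) b c) x = 0}" using poly_roots_finite[OF mp1(3)] .
  have ys_eq: "ys = sorted_list_of_set {x. poly (mpoly (Suc k) b c) x = 0}" unfolding ys_def zl_eq ..
  have setys: "set ys = {x. poly (mpoly (Suc k) b c) x = 0}" using ys_eq fin1 by simp
  have sys: "sorted_wrt (<) ys" using ys_eq by simp
  have card1: "card {x. poly (mpoly (Suc k) b c) x = 0} = degree (mpoly (Suc k) b c)"
    using lys ys_eq mp1(1) by simp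
  have ysle: "ys ! a \<le> ys ! a'" if "a \<le> a'" "a' < Suc k" for a a'
    using sorted_wrt_nth_less[OF sys, of a a'] that lys by (cases "a = a'") auto
  have ysroot: "meixner (Suc k) b c (ys ! i) = 0" if "i < Suc k" for i
  proof -
    have "ys ! i \<in> set ys" using that lys by simp
    then show ?thesis using setys by (simp add: poly_mpoly)
  qed
  define a where "a = (real k + 1 + (real k + 1 + b) * c) / (1 - c)"
  define lam where "lam = (real k + 1) * (real k + b) * c / (1 - c)^2"
  have lam0: "lam > 0" unfolding lam_def using b c by (simp add: add_nonneg_pos)
  have rec: "meixner (Suc (Suc k)) b c x = (x - a) * meixner (Suc k) b c x - lam * meixner k b c x" for x
    unfolding a_def lam_def by (rule meixner_rec[OF b c])
  have sg_ys: "(-1) ^ (Suc k - i) * meixner (Suc (Suc k)) b c (ys ! i) > 0" if "i < Suc k" for i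
  proof -
    have "meixner (Suc (Suc k)) b c (ys ! i) = - lam * meixner k b c (ys ! i)"
      using rec[of "ys ! i"] ysroot[OF that] by simp
    moreover have "Suc k - i = Suc (k - i)" using that by simp
    ultimately have "(-1) ^ (Suc k - i) * meixner (Suc (Suc k)) b c (ys ! i) = lam * ((-1) ^ (k - i) * meixner k b c (ys ! i))"
      by simp
    then show ?thesis using lam0 sgk that by simp
  qed
  obtain R0 where R0: "\<forall>x\<ge>R0. meixner (Suc (Suc k)) b c x \<ge> 1" using mp2(4) by blast
  define R where "R = max R0 (ys ! k + 1)"
  define t where "t = (\<lambda>i::nat. if i = 0 then 0 else if i - 1 < Suc k then ys ! (i - 1) else R)"
  have t0: "t 0 = 0" and tS: "\<And>j. t (Suc j) = (if j < Suc k then ys ! j else R)" unfolding t_def by auto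
  have Rgt: "R > ys ! k" unfolding R_def by simp
  have tinc: "\<forall>i<Suc (Suc k). t i < t (Suc i)"
  proof (intro allI impI)
    fix i assume i: "i < Suc (Suc k)"
    show "t i < t (Suc i)"
    proof (cases i)
      case 0
      then show ?thesis using pos by (simp add: t0 tS)
    next
      case (Suc j)
      show ?thesis
      proof (cases "Suc j < Suc k")
        case True
        then show ?thesis using Suc sorted_wrt_nth_less[OF sys, of j "Suc j"] lys by (simp add: tS)
      next
        case False
        then have "j = k" using Suc i by simp
        then show ?thesis using Suc Rgt by (simp add: tS)
      qed
    qed
  qed
  have sg: "\<forall>i\<le>Suc (Suc k). (-1) ^ (Suc (Suc k) - i) * poly (mpoly (Suc (Suc k)) b c) (t i) > 0"
  proof (intro allI impI)
    fix i assume i: "i \<le> Suc (Suc k)"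
    show "(-1) ^ (Suc (Suc k) - i) * poly (mpoly (Suc (Suc k)) b c) (t i) > 0"
    proof (cases i)
      case 0
      then show ?thesis using meixner_at0_sign[OF c pbn[of "Suc (Suc k)"]] by (simp add: t0 poly_mpoly)
    next
      case (Suc j)
      show ?thesis
      proof (cases "j < Suc k")
        case True
        then show ?thesis using Suc sg_ys[OF True] by (simp add: tS poly_mpoly)
      next
        case False
        then have "j = Suc k" using Suc i by simp
        moreover have "meixner (Suc (Suc k)) b c R \<ge> 1" using R0 R_def by simp
        ultimately show ?thesis using Suc by (simp add: tS poly_mpoly)
      qed
    qed
  qed
  have RC: "length zs = Suc (Suc k) \<and> card {x. poly (mpoly (Suc (Suc k)) b c) x = 0} = Suc (Suc k) \<and>
    (\<forall>i<Suc (Suc k). t i < zs ! i \<and> zs ! i < t (Suc i))"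
    using roots_construct[OF mp2(1) mp2(3) tinc sg] unfolding zs_def zl_eq .
  have tnn: "t i \<ge> 0" for i
  proof (cases i)
    case 0 then show ?thesis by (simp add: t0)
  next
    case (Suc j) then show ?thesis using pos Rgt by (auto simp: tS less_imp_le intro: order.trans[of 0 "ys ! k"])
  qed
  have zpos: "\<forall>i<Suc (Suc k). 0 < zs ! i" using RC tnn by (meson le_less_trans)
  have zsg: "\<forall>i<Suc (Suc k). (-1) ^ (Suc k - i) * meixner (Suc k) b c (zs ! i) > 0"
  proof (intro allI impI)
    fix i assume i: "i < Suc (Suc k)"
    have lo: "\<forall>k'<i. ys ! k' < zs ! i"
    proof (intro allI impI)
      fix k' assume k': "k' < i"
      then obtain j where j: "i = Suc j" by (cases i) auto
      have "ys ! k' \<le> ys ! j" using ysle[of k' j] k' j i by simp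
      also have "ys ! j = t i" using j i by (simp add: tS)
      also have "t i < zs ! i" using RC i by simp
      finally show "ys ! k' < zs ! i" .
    qed
    have hi: "\<forall>k'. i \<le> k' \<longrightarrow> k' < length ys \<longrightarrow> zs ! i < ys ! k'"
    proof (intro allI impI)
      fix k' assume k': "i \<le> k'" "k' < length ys"
      have "zs ! i < t (Suc i)" using RC i by simp
      also have "t (Suc i) = ys ! i" using k' lys by (simp add: tS)
      also have "ys ! i \<le> ys ! k'" using ysle[of i k'] k' lys by simp
      finally show "zs ! i < ys ! k'" .
    qed
    have "(-1) ^ (length ys - i) * poly (mpoly (Suc k) b c) (zs ! i) > 0"
      using sign_between[OF mp1(2) card1 ys_eq _ lo hi] i lys by simp
    then show "(-1) ^ (Suc k - i) * meixner (Suc k) b c (zs ! i) > 0" using lys by (simp add: poly_mpoly)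
  qed
  show ?case using RC zpos zsg unfolding zs_def by simp
qed

lemma key_alg:
  fixes be c M :: real
  assumes "c \<noteq> 1"
  defines "a \<equiv> (M + 1 + (M + 1 + (be + 2)) * c) / (1 - c)"
    and "lam \<equiv> (M + 1) * (M + (be + 2)) * c / (1 - c)^2"
    and "e \<equiv> 2 * (M + 2) * c / (1 - c)"
    and "f \<equiv> (M + 2) * (M + 1) * c^2 / (1 - c)^2"
    and "A \<equiv> be / (c - 1) - be - (M + 2) - 1"
  shows "e * lam = f * (a - A)"
proof -
  have "1 - c \<noteq> 0" "c - 1 \<noteq> 0" using assms by auto
  then show ?thesis unfolding a_def lam_def e_def f_def A_def
    apply (simp add: divide_simps power2_eq_square)
    apply ((simp add: algebra_simps)?)
    done
qed

lemma P_at_root: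
  fixes be c y :: real and m :: nat
  assumes be: "-2 < be" "be < -1" and c: "0 < c" "c < 1"
    and root: "meixner (Suc (Suc m)) (be + 2) c y = 0"
  defines "lam \<equiv> (real m + 1) * (real m + (be + 2)) * c / (1 - c)^2"
    and "f \<equiv> (real m + 2) * (real m + 1) * c^2 / (1 - c)^2"
  shows "lam * meixner (Suc (Suc m)) be c y = f * (y - A_n be c (real (Suc (Suc m)))) * meixner (Suc m) (be + 2) c y"
proof -
  define a where "a = (real m + 1 + (real m + 1 + (be + 2)) * c) / (1 - c)"
  define e where "e = 2 * (real m + 2) * c / (1 - c)"
  define A where "A = be / (c - 1) - be - (real m + 2) - 1"
  have b: "be + 2 > 0" using be by simp
  have AA: "A_n be c (real (Suc (Suc m))) = A" unfolding A_def A_n_def by simp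
  have rec: "meixner (Suc (Suc m)) (be + 2) c y = (y - a) * meixner (Suc m) (be + 2) c y - lam * meixner m (be + 2) c y"
    unfolding a_def lam_def by (rule meixner_rec[OF b c])
  have dec: "meixner (Suc (Suc m)) be c y = meixner (Suc (Suc m)) (be + 2) c y + e * meixner (Suc m) (be + 2) c y + f * meixner m (be + 2) c y"
    unfolding e_def f_def by (rule meixner_dec[OF be c])
  have k: "e * lam = f * (a - A)" unfolding a_def lam_def e_def f_def A_def
    using key_alg[where be=be and c=c and M="real m"] c by simp
  have l0: "lam * meixner m (be + 2) c y = (y - a) * meixner (Suc m) (be + 2) c y" using rec root by simp
  have "lam * meixner (Suc (Suc m)) be c y = e * lam * meixner (Suc m) (be + 2) c y + f * (lam * meixner m (be + 2) c y)"
    using dec root by (simp add: algebra_simps)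
  also have "\<dots> = f * (a - A) * meixner (Suc m) (be + 2) c y + f * ((y - a) * meixner (Suc m) (be + 2) c y)"
    using k l0 by simp
  also have "\<dots> = f * (y - A) * meixner (Suc m) (be + 2) c y" by (simp add: algebra_simps)
  finally show ?thesis unfolding AA .
qed

lemma main_iff:
  fixes be c :: real and m :: nat
  assumes be: "-2 < be" "be < -1" and c: "0 < c" "c < 1"
  shows "interlace (Suc (Suc m)) (zero_list (Suc (Suc m)) be c) (zero_list (Suc (Suc m)) (be + 2) c)
     \<longleftrightarrow> A_n be c (real (Suc (Suc m))) < zero_list (Suc (Suc m)) (be + 2) c ! 0"
proof -
  define n where "n = Suc (Suc m)"
  define ys where "ys = zero_list n (be + 2) c"
  define xs where "xs = zero_list n be c"
  define A where "A = A_n be c (real n)"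
  define lam where "lam = (real m + 1) * (real m + (be + 2)) * c / (1 - c)^2"
  define f where "f = (real m + 2) * (real m + 1) * c^2 / (1 - c)^2"
  have b: "be + 2 > 0" using be by simp
  have lam0: "lam > 0" unfolding lam_def using b c by (simp add: add_nonneg_pos)
  have f0: "f > 0" unfolding f_def using c by simp
  have pbQ: "pochhammer (be + 2) k > 0" for k using b by (simp add: pochhammer_pos)
  have pbP: "pochhammer be n > 0"
  proof -
    have "pochhammer be n = be * (be + 1) * pochhammer (be + 2) m" unfolding n_def by (rule pochb2)
    moreover have "be * (be + 1) > 0" using be by (simp add: mult_neg_neg)
    ultimately show ?thesis using pbQ[of m] by simp
  qed
  note mpQ = mpoly_props[OF less_imp_neq[OF pbQ[of n], symmetric] c]
  note mpQ1 = mpoly_props[OF less_imp_neq[OF pbQ[of "Suc m"], symmetric] c]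
  note mpP = mpoly_props[OF less_imp_neq[OF pbP, symmetric] c]
  have QR: "length ys = n \<and> (\<forall>i<n. 0 < ys ! i) \<and> (\<forall>i<n. (-1) ^ (Suc m - i) * meixner (Suc m) (be + 2) c (ys ! i) > 0)"
    using Q_roots[OF b c, of "Suc m"] unfolding ys_def n_def by simp
  then have lys: "length ys = n" and ypos: "\<forall>i<n. 0 < ys ! i"
    and sq: "\<forall>i<n. (-1) ^ (Suc m - i) * meixner (Suc m) (be + 2) c (ys ! i) > 0" by auto
  have finQ: "finite {x. poly (mpoly n (be + 2) c) x = 0}" using poly_roots_finite[OF mpQ(3)] .
  have ys_eq: "ys = sorted_list_of_set {x. poly (mpoly n (be + 2) c) x = 0}" unfolding ys_def zl_eq ..
  have setys: "set ys = {x. poly (mpoly n (be + 2) c) x = 0}" using ys_eq finQ by simp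
  have sys: "sorted_wrt (<) ys" using ys_eq by simp
  have yroot: "meixner n (be + 2) c (ys ! i) = 0" if "i < n" for i
  proof -
    have "ys ! i \<in> set ys" using that lys by simp
    then show ?thesis using setys by (simp add: poly_mpoly)
  qed
  have key: "lam * meixner n be c (ys ! i) = f * (ys ! i - A) * meixner (Suc m) (be + 2) c (ys ! i)" if "i < n" for i
    using P_at_root[OF be c, of m "ys ! i"] yroot[OF that] unfolding lam_def f_def A_def n_def by simp
  have keys: "lam * ((-1) ^ (Suc m - i) * meixner n be c (ys ! i)) = f * (ys ! i - A) * ((-1) ^ (Suc m - i) * meixner (Suc m) (be + 2) c (ys ! i))"
    if "i < n" for i
  proof -
    have "lam * ((-1) ^ (Suc m - i) * meixner n be c (ys ! i)) = (-1) ^ (Suc m - i) * (lam * meixner n be c (ys ! i))"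
      by (simp add: algebra_simps)
    also have "\<dots> = (-1) ^ (Suc m - i) * (f * (ys ! i - A) * meixner (Suc m) (be + 2) c (ys ! i))" using key[OF that] by simp
    finally show ?thesis by (simp add: algebra_simps)
  qed
  have finP: "finite {x. poly (mpoly n be c) x = 0}" using poly_roots_finite[OF mpP(3)] .
  have xs_eq: "xs = sorted_list_of_set {x. poly (mpoly n be c) x = 0}" unfolding xs_def zl_eq ..
  have sxs: "sorted_wrt (<) xs" using xs_eq by simp
  have "interlace n xs ys \<longleftrightarrow> A < ys ! 0"
  proof
    assume il: "interlace n xs ys"
    then have lxs: "length xs = n" and xy: "\<forall>i<n. xs ! i < ys ! i" and yx: "\<forall>i. i + 1 < n \<longrightarrow> ys ! i < xs ! (i + 1)"
      unfolding interlace_def by auto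
    have cardP: "card {x. poly (mpoly n be c) x = 0} = degree (mpoly n be c)"
      using lxs xs_eq mpP(1) by simp
    have lo: "\<forall>k<1. xs ! k < ys ! 0" using xy n_def by simp
    have hi: "\<forall>k. 1 \<le> k \<longrightarrow> k < length xs \<longrightarrow> ys ! 0 < xs ! k"
    proof (intro allI impI)
      fix k assume k: "1 \<le> k" "k < length xs"
      have "ys ! 0 < xs ! 1" using yx[rule_format, of 0] n_def by simp
      also have "xs ! 1 \<le> xs ! k" using sorted_wrt_nth_less[OF sxs, of 1 k] k by (cases "k = 1") auto
      finally show "ys ! 0 < xs ! k" .
    qed
    have "(-1) ^ (length xs - 1) * poly (mpoly n be c) (ys ! 0) > 0"
      using sign_between[OF mpP(2) cardP xs_eq _ lo hi] lxs n_def by simp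
    then have X: "(-1) ^ (Suc m - 0) * meixner n be c (ys ! 0) > 0" using lxs n_def by (simp add: poly_mpoly)
    have Y: "(-1) ^ (Suc m - 0) * meixner (Suc m) (be + 2) c (ys ! 0) > 0"
    proof -
      have "0 < n" by (simp add: n_def)
      then show ?thesis using sq by blast
    qed
    have K: "lam * ((-1) ^ (Suc m - 0) * meixner n be c (ys ! 0)) = f * (ys ! 0 - A) * ((-1) ^ (Suc m - 0) * meixner (Suc m) (be + 2) c (ys ! 0))"
      using keys[of 0] n_def by simp
    show "A < ys ! 0"
    proof (rule ccontr)
      assume "\<not> A < ys ! 0"
      then have "f * (ys ! 0 - A) \<le> 0" using f0 by (simp add: mult_nonneg_nonpos)
      then have "f * (ys ! 0 - A) * ((-1) ^ (Suc m - 0) * meixner (Suc m) (be + 2) c (ys ! 0)) \<le> 0"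
        by (rule mult_nonpos_nonneg[OF _ less_imp_le[OF Y]])
      moreover have "lam * ((-1) ^ (Suc m - 0) * meixner n be c (ys ! 0)) > 0" by (rule mult_pos_pos[OF lam0 X])
      ultimately show False unfolding K by linarith
    qed
  next
    assume Ay: "A < ys ! 0"
    define t where "t = (\<lambda>i::nat. if i = 0 then 0 else ys ! (i - 1))"
    have t0: "t 0 = 0" and tS: "\<And>j. t (Suc j) = ys ! j" unfolding t_def by auto
    have tinc: "\<forall>i<n. t i < t (Suc i)"
    proof (intro allI impI)
      fix i assume i: "i < n"
      show "t i < t (Suc i)"
      proof (cases i)
        case 0 then show ?thesis using ypos i by (simp add: t0 tS)
      next
        case (Suc j) then show ?thesis using sorted_wrt_nth_less[OF sys, of j "Suc j"] lys i by (simp add: tS)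
      qed
    qed
    have sg: "\<forall>i\<le>n. (-1) ^ (n - i) * poly (mpoly n be c) (t i) > 0"
    proof (intro allI impI)
      fix i assume i: "i \<le> n"
      show "(-1) ^ (n - i) * poly (mpoly n be c) (t i) > 0"
      proof (cases i)
        case 0 then show ?thesis using meixner_at0_sign[OF c pbP] by (simp add: t0 poly_mpoly)
      next
        case (Suc j)
        then have j: "j < n" using i by simp
        have "ys ! 0 \<le> ys ! j" using sorted_wrt_nth_less[OF sys, of 0 j] j lys by (cases "j = 0") auto
        then have yA: "ys ! j - A > 0" using Ay by simp
        have "f * (ys ! j - A) * ((-1) ^ (Suc m - j) * meixner (Suc m) (be + 2) c (ys ! j)) > 0"
          using f0 yA sq j by simp
        then have "lam * ((-1) ^ (Suc m - j) * meixner n be c (ys ! j)) > 0" unfolding keys[OF j] .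
        then have "(-1) ^ (Suc m - j) * meixner n be c (ys ! j) > 0" using lam0 by (simp add: zero_less_mult_iff)
        moreover have "n - i = Suc m - j" using Suc n_def by simp
        ultimately show ?thesis using Suc by (simp add: tS poly_mpoly)
      qed
    qed
    have RC: "length xs = n \<and> card {x. poly (mpoly n be c) x = 0} = n \<and>
      (\<forall>i<n. t i < xs ! i \<and> xs ! i < t (Suc i))"
      using roots_construct[OF mpP(1) mpP(3) tinc sg] unfolding xs_eq .
    show "interlace n xs ys"
      unfolding interlace_def
    proof (intro conjI allI impI)
      show "length xs = n" using RC by simp
      show "length ys = n" using lys .
      fix i
      { assume "i < n" then show "xs ! i < ys ! i" using RC by (simp add: tS) }
      { assume i1: "i + 1 < n"
        then have "t (Suc i) < xs ! (Suc i)" using RC by simp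
        then show "ys ! i < xs ! (i + 1)" by (simp add: tS) }
    qed
  qed
  then show ?thesis unfolding n_def xs_def ys_def A_def .
qed


theorem theorem4p4:
  fixes \<beta> c :: real
  assumes "-2 < \<beta>" "\<beta> < -1" "0 < c" "c < 1"
  shows "(\<forall>n::nat. n \<ge> 3 \<longrightarrow> real n \<ge> \<beta> / (c - 1) - (\<beta> + 1) \<longrightarrow>
            A_n \<beta> c (real n) \<le> 0 \<and>
            interlace n (zero_list n \<beta> c) (zero_list n (\<beta> + 2) c))
       \<and> (\<forall>m1 m2 :: int.
            \<beta> / (c - 1) - (\<beta> + 2) < of_int m1 \<and> of_int m1 < \<beta> / (c - 1) - (\<beta> + 1) \<and>
            \<beta> / (c - 1) - (\<beta> + 2) < of_int m2 \<and> of_int m2 < \<beta> / (c - 1) - (\<beta> + 1)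
            \<longrightarrow> m1 = m2)
       \<and> (\<forall>m :: int.
            \<beta> / (c - 1) - (\<beta> + 2) < of_int m \<and> of_int m < \<beta> / (c - 1) - (\<beta> + 1)
            \<longrightarrow> 0 < A_n \<beta> c (of_int m) \<and> A_n \<beta> c (of_int m) < 1)
       \<and> (\<forall>n::nat. n \<ge> 3 \<longrightarrow>
            \<beta> / (c - 1) < real n \<and> real n < \<beta> / (c - 1) - (\<beta> + 1) \<longrightarrow>
            (interlace n (zero_list n \<beta> c) (zero_list n (\<beta> + 2) c)
               \<longleftrightarrow> A_n \<beta> c (real n) < zero_list n (\<beta> + 2) c ! 0))"
proof -
  let ?L = "\<beta> / (c - 1)"
  have be: "-2 < \<beta>" "\<beta> < -1" and c: "0 < c" "c < 1" using assms by auto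
  have b: "\<beta> + 2 > 0" using be by simp
  have P1: "\<forall>n::nat. n \<ge> 3 \<longrightarrow> real n \<ge> ?L - (\<beta> + 1) \<longrightarrow>
            A_n \<beta> c (real n) \<le> 0 \<and> interlace n (zero_list n \<beta> c) (zero_list n (\<beta> + 2) c)"
  proof (intro allI impI)
    fix n :: nat assume n3: "n \<ge> 3" and nL: "real n \<ge> ?L - (\<beta> + 1)"
    have A0: "A_n \<beta> c (real n) \<le> 0" unfolding A_n_def using nL by linarith
    define m where "m = n - 2"
    have nm: "n = Suc (Suc m)" using n3 unfolding m_def by simp
    have "0 < zero_list (Suc (Suc m)) (\<beta> + 2) c ! 0" using Q_roots[OF b c, of "Suc m"] by simp
    then have "A_n \<beta> c (real n) < zero_list n (\<beta> + 2) c ! 0" using A0 nm by simp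
    then have "interlace n (zero_list n \<beta> c) (zero_list n (\<beta> + 2) c)"
      using main_iff[OF be c, of m] nm by simp
    then show "A_n \<beta> c (real n) \<le> 0 \<and> interlace n (zero_list n \<beta> c) (zero_list n (\<beta> + 2) c)"
      using A0 by simp
  qed
  have P2: "\<forall>m1 m2 :: int.
            ?L - (\<beta> + 2) < of_int m1 \<and> of_int m1 < ?L - (\<beta> + 1) \<and>
            ?L - (\<beta> + 2) < of_int m2 \<and> of_int m2 < ?L - (\<beta> + 1)
            \<longrightarrow> m1 = m2"
  proof (intro allI impI)
    fix m1 m2 :: int
    assume h: "?L - (\<beta> + 2) < of_int m1 \<and> of_int m1 < ?L - (\<beta> + 1) \<and>
            ?L - (\<beta> + 2) < of_int m2 \<and> of_int m2 < ?L - (\<beta> + 1)"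
    have "real_of_int (m1 - m2) < 1" "real_of_int (m1 - m2) > -1" using h by auto
    then have "m1 - m2 < 1" "m1 - m2 > -1" by linarith+
    then show "m1 = m2" by linarith
  qed
  have P3: "\<forall>m :: int.
            ?L - (\<beta> + 2) < of_int m \<and> of_int m < ?L - (\<beta> + 1)
            \<longrightarrow> 0 < A_n \<beta> c (of_int m) \<and> A_n \<beta> c (of_int m) < 1"
    unfolding A_n_def by auto
  have P4: "\<forall>n::nat. n \<ge> 3 \<longrightarrow>
            ?L < real n \<and> real n < ?L - (\<beta> + 1) \<longrightarrow>
            (interlace n (zero_list n \<beta> c) (zero_list n (\<beta> + 2) c)
               \<longleftrightarrow> A_n \<beta> c (real n) < zero_list n (\<beta> + 2) c ! 0)"
  proof (intro allI impI)
    fix n :: nat assume n3: "n \<ge> 3"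
    define m where "m = n - 2"
    have nm: "n = Suc (Suc m)" using n3 unfolding m_def by simp
    show "interlace n (zero_list n \<beta> c) (zero_list n (\<beta> + 2) c)
               \<longleftrightarrow> A_n \<beta> c (real n) < zero_list n (\<beta> + 2) c ! 0"
      using main_iff[OF be c, of m] nm by simp
  qed
  show ?thesis using P1 P2 P3 P4 by blast
qed

end
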